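(* For every $n\ge1$, the half space $\mathbb R^n_+=\{(x_1,\dots,x_n)\in\mathbb R^n: x_n\ge0\}$ with the Euclidean metric is an absolute extensor in the category $\mathcal A$ and in the category $\tilde{\mathcal A}$.
   Context: A metric space is proper if all closed balls are compact; a map is proper if preimages of compact sets are compact; a map $f:X\to Y$ of metric spaces is asymptotically Lipschitz if there are $\lambda,s\ge0$ with $d_Y(f(x),f(x'))\le\lambda d_X(x,x')+s$ for all $x,x'$. The category $\mathcal A$ has proper metric spaces as objects and continuous proper asymptotically Lipschitz maps as morphisms. The category $\tilde{\mathcal A}$ has the same objects; its morphisms are morphisms $f:X\to Y$ of $\mathcal A$ with nonzero norm, meaning: for base points $x_0\in X$, $y_0\in Y$ there exist $c>0$, $b\ge0$ with $d_Y(f(x),y_0)\ge c\,d_X(x,x_0)-b$ for all $x\in X$ (independent of base points). An object $Y$ is an absolute extensor in such a category if for every object $X$, every closed subset $A\subset X$ with the induced metric, and every morphism $\phi:A\to Y$, there is a morphism $\bar\phi:X\to Y$ with $\bar\phi|_A=\phi$. *)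

theory Defs
  imports "HOL-Analysis.Analysis"
begin

definition proper_metric :: "'a metric \<Rightarrow> bool" where
  "proper_metric X \<longleftrightarrow>
     (\<forall>x\<in>mspace X. \<forall>r. compactin (mtopology_of X) (mcball_of X x r))"

definition proper_mmap :: "'a metric \<Rightarrow> 'b metric \<Rightarrow> ('a \<Rightarrow> 'b) \<Rightarrow> bool" where
  "proper_mmap X Y f \<longleftrightarrow>
     (\<forall>K. compactin (mtopology_of Y) K \<longrightarrow>
          compactin (mtopology_of X) {x \<in> mspace X. f x \<in> K})"

definition asymp_lipschitz :: "'a metric \<Rightarrow> 'b metric \<Rightarrow> ('a \<Rightarrow> 'b) \<Rightarrow> bool" where
  "asymp_lipschitz X Y f \<longleftrightarrow>
     (\<exists>L s. L \<ge> 0 \<and> s \<ge> 0 \<and>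
        (\<forall>x\<in>mspace X. \<forall>x'\<in>mspace X. mdist Y (f x) (f x') \<le> L * mdist X x x' + s))"

definition morphism_A :: "'a metric \<Rightarrow> 'b metric \<Rightarrow> ('a \<Rightarrow> 'b) \<Rightarrow> bool" where
  "morphism_A X Y f \<longleftrightarrow>
     continuous_map (mtopology_of X) (mtopology_of Y) f \<and>
     proper_mmap X Y f \<and> asymp_lipschitz X Y f"

text \<open>Nonzero norm (stated for all base points; the paper notes independence of base points).\<close>
definition nonzero_norm :: "'a metric \<Rightarrow> 'b metric \<Rightarrow> ('a \<Rightarrow> 'b) \<Rightarrow> bool" where
  "nonzero_norm X Y f \<longleftrightarrow>
     (\<forall>x0\<in>mspace X. \<forall>y0\<in>mspace Y. \<exists>c b. c > 0 \<and> b \<ge> 0 \<and>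
        (\<forall>x\<in>mspace X. mdist Y (f x) y0 \<ge> c * mdist X x x0 - b))"

definition morphism_At :: "'a metric \<Rightarrow> 'b metric \<Rightarrow> ('a \<Rightarrow> 'b) \<Rightarrow> bool" where
  "morphism_At X Y f \<longleftrightarrow> morphism_A X Y f \<and> nonzero_norm X Y f"

text \<open>Extension property of the target Y with respect to one object X (the absolute
  extensor property is this for every object X of every type).\<close>
definition extends_A :: "'a metric \<Rightarrow> 'b metric \<Rightarrow> bool" where
  "extends_A X Y \<longleftrightarrow>
     (\<forall>A \<phi>. closedin (mtopology_of X) A \<longrightarrow> morphism_A (submetric X A) Y \<phi> \<longrightarrow>
        (\<exists>\<psi>. morphism_A X Y \<psi> \<and> (\<forall>a\<in>A. \<psi> a = \<phi> a)))"

definition extends_At :: "'a metric \<Rightarrow> 'b metric \<Rightarrow> bool" where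
  "extends_At X Y \<longleftrightarrow>
     (\<forall>A \<phi>. closedin (mtopology_of X) A \<longrightarrow> morphism_At (submetric X A) Y \<phi> \<longrightarrow>
        (\<exists>\<psi>. morphism_At X Y \<psi> \<and> (\<forall>a\<in>A. \<psi> a = \<phi> a)))"

definition half_space_metric :: "'n::finite \<Rightarrow> (real^'n) metric" where
  "half_space_metric k = submetric euclidean_metric {x. x $ k \<ge> 0}"

end

theory Submission
  imports Defs
begin

definition mcs :: "'a metric \<Rightarrow> 'a set \<Rightarrow> ('a \<Rightarrow> real) \<Rightarrow> real \<Rightarrow> 'a \<Rightarrow> real" where
  "mcs X A f L x = Inf ((\<lambda>a. f a + L * mdist X x a) ` A)"

lemma mcs_props:
  assumes AX: "A \<subseteq> mspace X" and ne: "A \<noteq> {}" and L: "L \<ge> 0"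
    and lip: "\<And>a a'. a \<in> A \<Longrightarrow> a' \<in> A \<Longrightarrow> f a - f a' \<le> L * mdist X a a' + s"
  shows "\<And>x y. x \<in> mspace X \<Longrightarrow> y \<in> mspace X \<Longrightarrow> mcs X A f L x \<le> mcs X A f L y + L * mdist X x y"
    and "\<And>a. a \<in> A \<Longrightarrow> mcs X A f L a \<le> f a"
    and "\<And>a. a \<in> A \<Longrightarrow> f a - s \<le> mcs X A f L a"
    and "\<And>x a. x \<in> mspace X \<Longrightarrow> a \<in> A \<Longrightarrow> mcs X A f L x \<le> f a + L * mdist X x a"
    and "\<And>x c. x \<in> mspace X \<Longrightarrow> (\<And>a. a \<in> A \<Longrightarrow> c \<le> f a + L * mdist X x a) \<Longrightarrow> c \<le> mcs X A f L x"
proof -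
  interpret Metric_space "mspace X" "mdist X" by (rule Metric_space_mspace_mdist)
  obtain a0 where a0: "a0 \<in> A" using ne by blast
  have bdd: "bdd_below ((\<lambda>a. f a + L * mdist X x a) ` A)" if x: "x \<in> mspace X" for x
  proof (rule bdd_belowI2)
    fix a assume a: "a \<in> A"
    have "f a0 - f a \<le> L * mdist X a0 a + s" using lip a a0 by blast
    moreover have "mdist X a0 a \<le> mdist X a0 x + mdist X x a" using a a0 x AX triangle by blast
    moreover have "L * mdist X a0 a \<le> L * (mdist X a0 x + mdist X x a)"
      using calculation(2) L mult_left_mono by blast
    ultimately show "f a0 - s - L * mdist X a0 x \<le> f a + L * mdist X x a"
      by (simp add: algebra_simps)
  qed
  show low: "mcs X A f L x \<le> f a + L * mdist X x a" if "x \<in> mspace X" "a \<in> A" for x a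
    unfolding mcs_def using bdd[OF that(1)] that(2) by (rule cINF_lower)
  show grt: "c \<le> mcs X A f L x" if "x \<in> mspace X" "\<And>a. a \<in> A \<Longrightarrow> c \<le> f a + L * mdist X x a" for x c
    unfolding mcs_def using ne that(2) by (intro cINF_greatest) auto
  show "mcs X A f L x \<le> mcs X A f L y + L * mdist X x y" if x: "x \<in> mspace X" and y: "y \<in> mspace X" for x y
  proof -
    have "mcs X A f L x - L * mdist X x y \<le> mcs X A f L y"
    proof (rule grt[OF y])
      fix a assume a: "a \<in> A"
      have "mdist X x a \<le> mdist X x y + mdist X y a" using a x y AX triangle by blast
      then have "L * mdist X x a \<le> L * mdist X x y + L * mdist X y a"
        using L by (metis distrib_left mult_left_mono)
      then show "mcs X A f L x - L * mdist X x y \<le> f a + L * mdist X y a"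
        using low[OF x a] by linarith
    qed
    then show ?thesis by linarith
  qed
  show "mcs X A f L a \<le> f a" if "a \<in> A" for a
    using low[of a a] that AX by auto
  show "f a - s \<le> mcs X A f L a" if a: "a \<in> A" for a
  proof (rule grt)
    show "a \<in> mspace X" using a AX by auto
    fix a' assume "a' \<in> A"
    then show "f a - s \<le> f a' + L * mdist X a a'" using lip[OF a \<open>a' \<in> A\<close>] by linarith
  qed
qed

lemma lip_cont_real:
  assumes "\<And>x y. x \<in> mspace X \<Longrightarrow> y \<in> mspace X \<Longrightarrow> \<bar>F x - F y\<bar> \<le> B * mdist X x y"
  shows "continuous_map (mtopology_of X) euclideanreal F"
proof -
  have "Lipschitz_continuous_map X euclidean_metric F"
    unfolding Lipschitz_continuous_map_def using assms by (auto simp: dist_real_def)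
  then show ?thesis using Lipschitz_continuous_imp_continuous_map by fastforce
qed

lemma ext_real:
  assumes A: "closedin (mtopology_of X) A" "A \<noteq> {}"
    and cf: "continuous_map (subtopology (mtopology_of X) A) euclideanreal f"
    and L: "L \<ge> 0" and s: "s \<ge> 0"
    and lip: "\<And>a a'. a \<in> A \<Longrightarrow> a' \<in> A \<Longrightarrow> \<bar>f a - f a'\<bar> \<le> L * mdist X a a' + s"
  obtains E where "continuous_map (mtopology_of X) euclideanreal E" "\<And>a. a \<in> A \<Longrightarrow> E a = f a"
     "\<And>x y. x \<in> mspace X \<Longrightarrow> y \<in> mspace X \<Longrightarrow> \<bar>E x - E y\<bar> \<le> L * mdist X x y + s"
proof -
  have AX: "A \<subseteq> mspace X" using closedin_subset[OF A(1)] by simp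
  define F where "F = mcs X A f L"
  have lip': "\<And>a a'. a \<in> A \<Longrightarrow> a' \<in> A \<Longrightarrow> f a - f a' \<le> L * mdist X a a' + s"
    by (metis abs_le_D1 lip)
  have P: "\<And>x y. x \<in> mspace X \<Longrightarrow> y \<in> mspace X \<Longrightarrow> F x \<le> F y + L * mdist X x y"
    "\<And>a. a \<in> A \<Longrightarrow> F a \<le> f a" "\<And>a. a \<in> A \<Longrightarrow> f a - s \<le> F a"
    unfolding F_def using mcs_props[of A X L f s] AX A(2) L lip' by blast+
  have Flip: "\<bar>F x - F y\<bar> \<le> L * mdist X x y" if "x \<in> mspace X" "y \<in> mspace X" for x y
    using P(1)[OF that] P(1)[OF that(2,1)] by (simp add: mdist_commute abs_le_iff)
  have cF: "continuous_map (mtopology_of X) euclideanreal F"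
    by (rule lip_cont_real[OF Flip])
  have cg: "continuous_map (subtopology (mtopology_of X) A) euclideanreal (\<lambda>x. f x - F x)"
    by (intro continuous_map_diff cf continuous_map_from_subtopology cF)
  have rg: "(\<lambda>x. f x - F x) ` A \<subseteq> {0..s}"
    using P(2) P(3) by (force simp: algebra_simps)
  have ns: "normal_space (mtopology_of X)"
    by (simp add: Metric_space.normal_space_mtopology Metric_space_mspace_mdist mtopology_of_def)
  obtain G where G: "continuous_map (mtopology_of X) euclideanreal G"
      "\<And>x. x \<in> A \<Longrightarrow> G x = f x - F x" "G ` topspace (mtopology_of X) \<subseteq> {0..s}"
    using Tietze_extension_closed_real_interval[OF ns A(1) cg rg s] by blast
  show ?thesis
  proof
    show "continuous_map (mtopology_of X) euclideanreal (\<lambda>x. F x + G x)"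
      by (intro continuous_map_add cF G(1))
    show "F a + G a = f a" if "a \<in> A" for a using G(2)[OF that] by simp
    show "\<bar>F x + G x - (F y + G y)\<bar> \<le> L * mdist X x y + s" if "x \<in> mspace X" "y \<in> mspace X" for x y
    proof -
      have "G x \<in> {0..s}" "G y \<in> {0..s}" using G(3) that by auto
      then show ?thesis using Flip[OF that] by (auto simp: abs_le_iff)
    qed
  qed
qed

lemma cm_vec_nth: "continuous_map X euclidean f \<Longrightarrow> continuous_map X euclideanreal (\<lambda>x. f x $ i)"
  by (simp add: continuous_map_atin tendsto_vec_nth)

lemma cm_vec_lambda: "(\<And>i. continuous_map X euclideanreal (g i)) \<Longrightarrow> continuous_map X euclidean (\<lambda>x. \<chi> i. g i x)"
  by (simp add: continuous_map_atin tendsto_vec_lambda)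

lemma mtop_half: "mtopology_of (half_space_metric k) = subtopology euclidean {x. x $ k \<ge> 0}"
  by (simp add: half_space_metric_def mtopology_of_submetric)

lemma mspace_half: "mspace (half_space_metric k) = {x. x $ k \<ge> 0}"
  by (simp add: half_space_metric_def)

lemma mdist_half: "mdist (half_space_metric k) = dist"
  by (simp add: half_space_metric_def)

lemma main:
  fixes X :: "'a metric" and k :: "'n::finite" and \<phi> :: "'a \<Rightarrow> real^'n"
  assumes pX: "proper_metric X" and Acl: "closedin (mtopology_of X) A" and Ane: "A \<noteq> {}"
    and mor: "morphism_A (submetric X A) (half_space_metric k) \<phi>"
  shows "\<exists>\<psi>. morphism_A X (half_space_metric k) \<psi> \<and> (\<forall>a\<in>A. \<psi> a = \<phi> a) \<and>
     (nonzero_norm (submetric X A) (half_space_metric k) \<phi> \<longrightarrow> nonzero_norm X (half_space_metric k) \<psi>)"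
proof -
  interpret Metric_space "mspace X" "mdist X" by (rule Metric_space_mspace_mdist)
  define S where "S = {x::real^'n. x$k \<ge> 0}"
  have AX: "A \<subseteq> mspace X" using closedin_subset[OF Acl] by simp
  have mA: "mspace (submetric X A) = A" using AX by auto
  have cphi: "continuous_map (subtopology (mtopology_of X) A) (subtopology euclidean S) \<phi>"
    using mor by (simp add: morphism_A_def mtop_half mtopology_of_submetric S_def)
  then have cphi': "continuous_map (subtopology (mtopology_of X) A) euclidean \<phi>"
    and phiS: "\<And>a. a \<in> A \<Longrightarrow> \<phi> a \<in> S"
    using AX by (auto simp: continuous_map_in_subtopology)
  obtain L s where Ls: "L \<ge> 0" "s \<ge> 0"
      "\<And>a a'. a \<in> A \<Longrightarrow> a' \<in> A \<Longrightarrow> dist (\<phi> a) (\<phi> a') \<le> L * mdist X a a' + s"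
    using mor mA by (auto simp: morphism_A_def asymp_lipschitz_def mdist_half)
  have prpphi: "\<And>K. compactin (subtopology euclidean S) K \<Longrightarrow>
      compactin (subtopology (mtopology_of X) A) {a \<in> A. \<phi> a \<in> K}"
  proof -
    fix K assume K: "compactin (subtopology euclidean S) K"
    have "compactin (subtopology (mtopology_of X) A) {x \<in> A. x \<in> mspace X \<and> \<phi> x \<in> K}"
      using mor K by (simp add: morphism_A_def proper_mmap_def mtop_half mtopology_of_submetric S_def)
    moreover have "{x \<in> A. x \<in> mspace X \<and> \<phi> x \<in> K} = {a \<in> A. \<phi> a \<in> K}" using AX by auto
    ultimately show "compactin (subtopology (mtopology_of X) A) {a \<in> A. \<phi> a \<in> K}" by simp
  qed
  have Eex: "\<forall>i. \<exists>E. continuous_map (mtopology_of X) euclideanreal E \<and> (\<forall>a\<in>A. E a = \<phi> a $ i) \<and>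
      (\<forall>x\<in>mspace X. \<forall>y\<in>mspace X. \<bar>E x - E y\<bar> \<le> L * mdist X x y + s)"
  proof
    fix i
    have lipi: "\<bar>\<phi> a $ i - \<phi> a' $ i\<bar> \<le> L * mdist X a a' + s" if "a \<in> A" "a' \<in> A" for a a'
    proof -
      have "\<bar>\<phi> a $ i - \<phi> a' $ i\<bar> \<le> dist (\<phi> a) (\<phi> a')"
        by (metis component_le_norm_cart dist_norm vector_minus_component)
      then show ?thesis using Ls(3)[OF that] by linarith
    qed
    obtain E where "continuous_map (mtopology_of X) euclideanreal E" "\<And>a. a \<in> A \<Longrightarrow> E a = \<phi> a $ i"
     "\<And>x y. x \<in> mspace X \<Longrightarrow> y \<in> mspace X \<Longrightarrow> \<bar>E x - E y\<bar> \<le> L * mdist X x y + s"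
      using ext_real[OF Acl Ane cm_vec_nth[OF cphi'] Ls(1,2) lipi] by blast
    then show "\<exists>E. continuous_map (mtopology_of X) euclideanreal E \<and> (\<forall>a\<in>A. E a = \<phi> a $ i) \<and>
      (\<forall>x\<in>mspace X. \<forall>y\<in>mspace X. \<bar>E x - E y\<bar> \<le> L * mdist X x y + s)" by blast
  qed
  obtain E where E: "\<And>i. continuous_map (mtopology_of X) euclideanreal (E i)"
      "\<And>i a. a \<in> A \<Longrightarrow> E i a = \<phi> a $ i"
      "\<And>i x y. x \<in> mspace X \<Longrightarrow> y \<in> mspace X \<Longrightarrow> \<bar>E i x - E i y\<bar> \<le> L * mdist X x y + s"
  proof -
    from choice[OF Eex] obtain E where E0: "\<forall>i. continuous_map (mtopology_of X) euclideanreal (E i) \<and> (\<forall>a\<in>A. E i a = \<phi> a $ i) \<and>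
      (\<forall>x\<in>mspace X. \<forall>y\<in>mspace X. \<bar>E i x - E i y\<bar> \<le> L * mdist X x y + s)" by blast
    show ?thesis by (rule that) (use E0 in blast)+
  qed
  define D where "D = mcs X A (\<lambda>_. 0) 1"
  have lip0: "\<And>a a'. a \<in> A \<Longrightarrow> a' \<in> A \<Longrightarrow> (\<lambda>_. 0::real) a - (\<lambda>_. 0) a' \<le> 1 * mdist X a a' + 0"
    by simp
  have DP1: "D x \<le> D y + 1 * mdist X x y" if "x \<in> mspace X" "y \<in> mspace X" for x y
    unfolding D_def by (rule mcs_props(1)[OF AX Ane zero_le_one, of "\<lambda>_. 0" 0]) (use that in auto)
  have DP2: "D a \<le> 0" if "a \<in> A" for a
    unfolding D_def using mcs_props(2)[OF AX Ane zero_le_one, of "\<lambda>_. 0" 0 a] that by simp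
  have DP3: "0 - 0 \<le> D a" if "a \<in> A" for a
    unfolding D_def using mcs_props(3)[OF AX Ane zero_le_one, of "\<lambda>_. 0" 0 a] that by simp
  have DP4: "0 \<le> D x" if "x \<in> mspace X" for x
    unfolding D_def by (rule mcs_props(5)[OF AX Ane zero_le_one, of "\<lambda>_. 0" 0]) (use that in auto)
  have Dlip: "\<bar>D x - D y\<bar> \<le> mdist X x y" if "x \<in> mspace X" "y \<in> mspace X" for x y
    using DP1[OF that] DP1[OF that(2,1)] by (simp add: mdist_commute abs_le_iff)
  have D0: "D a = 0" if "a \<in> A" for a using DP2[OF that] DP3[OF that] by simp
  have Dge: "D x \<ge> 0" if "x \<in> mspace X" for x using DP4[OF that] .
  have Dex: "\<exists>a\<in>A. mdist X x a < D x + 1" if "x \<in> mspace X" for x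
  proof -
    have ne: "(\<lambda>a. 0 + 1 * mdist X x a) ` A \<noteq> {}" using Ane by simp
    have lt: "Inf ((\<lambda>a. 0 + 1 * mdist X x a) ` A) < D x + 1"
      unfolding D_def mcs_def by linarith
    obtain v where "v \<in> (\<lambda>a. 0 + 1 * mdist X x a) ` A" "v < D x + 1"
      using cInf_lessD[OF ne lt] by blast
    then show ?thesis by auto
  qed
  have cD: "continuous_map (mtopology_of X) euclideanreal D"
    by (rule lip_cont_real[of X D 1]) (simp add: Dlip)
  define \<psi> where "\<psi> x = (\<chi> i. if i = k then max 0 (E k x) + D x else E i x)" for x
  have \<psi>c: "\<psi> x $ i = (if i = k then max 0 (E k x) + D x else E i x)" for x i
    by (simp add: \<psi>_def)
  have \<psi>A: "\<psi> a = \<phi> a" if a: "a \<in> A" for a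
  proof -
    have "\<phi> a $ k \<ge> 0" using phiS[OF a] by (simp add: S_def)
    then show ?thesis using a by (simp add: vec_eq_iff \<psi>c E(2) D0)
  qed
  have \<psi>S: "\<psi> x $ k \<ge> 0" if "x \<in> mspace X" for x
    using Dge[OF that] by (simp add: \<psi>c)
  have coord: "\<bar>\<psi> x $ i - \<psi> y $ i\<bar> \<le> (L + 1) * mdist X x y + s"
    if xy: "x \<in> mspace X" "y \<in> mspace X" for x y i
  proof (cases "i = k")
    case True
    have "\<bar>max 0 (E k x) - max 0 (E k y)\<bar> \<le> \<bar>E k x - E k y\<bar>" by linarith
    then show ?thesis using True E(3)[OF xy, of k] Dlip[OF xy] by (simp add: \<psi>c algebra_simps)
  next
    case False
    then have "\<bar>\<psi> x $ i - \<psi> y $ i\<bar> = \<bar>E i x - E i y\<bar>" by (simp add: \<psi>c)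
    then show ?thesis using E(3)[OF xy, of i] nonneg[of x y] by (simp only: distrib_right mult_1)
  qed
  define C where "C = real CARD('n)"
  define \<Lambda> where "\<Lambda> = C * (L + 1)"
  define \<sigma> where "\<sigma> = C * s"
  have C0: "C \<ge> 0" by (simp add: C_def)
  have \<Lambda>0: "\<Lambda> \<ge> 0" using C0 Ls by (simp add: \<Lambda>_def)
  have \<sigma>0: "\<sigma> \<ge> 0" using C0 Ls by (simp add: \<sigma>_def)
  have \<psi>lip: "dist (\<psi> x) (\<psi> y) \<le> \<Lambda> * mdist X x y + \<sigma>" if xy: "x \<in> mspace X" "y \<in> mspace X" for x y
  proof -
    have "dist (\<psi> x) (\<psi> y) \<le> (\<Sum>i\<in>UNIV. \<bar>(\<psi> x - \<psi> y) $ i\<bar>)"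
      using norm_le_l1_cart[of "\<psi> x - \<psi> y"] by (simp add: dist_norm)
    also have "\<dots> \<le> (\<Sum>i\<in>(UNIV::'n set). (L + 1) * mdist X x y + s)"
      by (intro sum_mono) (simp add: coord[OF xy])
    also have "\<dots> = \<Lambda> * mdist X x y + \<sigma>"
      by (simp add: \<Lambda>_def \<sigma>_def C_def algebra_simps)
    finally show ?thesis .
  qed
  have c\<psi>: "continuous_map (mtopology_of X) euclidean \<psi>"
    unfolding \<psi>_def
  proof (rule cm_vec_lambda)
    fix i
    show "continuous_map (mtopology_of X) euclideanreal (\<lambda>x. if i = k then max 0 (E k x) + D x else E i x)"
      by (cases "i = k") (simp_all add: E(1) cD continuous_map_add continuous_map_real_max)
  qed
  have c\<psi>H: "continuous_map (mtopology_of X) (mtopology_of (half_space_metric k)) \<psi>"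
    using c\<psi> \<psi>S by (auto simp: mtop_half continuous_map_in_subtopology)
  have asy: "asymp_lipschitz X (half_space_metric k) \<psi>"
    unfolding asymp_lipschitz_def mdist_half using \<Lambda>0 \<sigma>0 \<psi>lip by blast
  have prp: "proper_mmap X (half_space_metric k) \<psi>"
    unfolding proper_mmap_def mtop_half
  proof (intro allI impI)
    fix K :: "(real^'n) set" assume K: "compactin (subtopology euclidean {x. 0 \<le> x $ k}) K"
    then have cK: "compact K" and KS: "K \<subseteq> S" by (auto simp: compactin_subtopology S_def)
    obtain R where R: "R > 0" "\<And>v. v \<in> K \<Longrightarrow> norm v \<le> R"
      using compact_imp_bounded[OF cK] unfolding bounded_pos by auto
    define P where "P = {x \<in> mspace X. \<psi> x \<in> K}"
    have "closedin euclidean K" using compact_imp_closed[OF cK] by simp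
    from closedin_continuous_map_preimage[OF c\<psi> this]
    have Pcl: "closedin (mtopology_of X) P" by (simp add: P_def)
    show "compactin (mtopology_of X) {x \<in> mspace X. \<psi> x \<in> K}"
    proof (cases "P = {}")
      case True then have "{x \<in> mspace X. \<psi> x \<in> K} = {}" by (simp add: P_def)
      then show ?thesis by (simp only: compactin_empty)
    next
      case False
      define R' where "R' = R + \<Lambda> * (R + 1) + \<sigma>"
      define K' where "K' = cball (0::real^'n) R' \<inter> S"
      have "compact K'" unfolding K'_def S_def
        by (intro compact_Int_closed compact_cball closed_halfspace_component_ge_cart)
      moreover have "K' \<subseteq> S" unfolding K'_def by (rule Int_lower2)
      ultimately have "compactin (subtopology euclidean S) K'" unfolding compactin_subtopology by simp
      then have "compactin (subtopology (mtopology_of X) A) {a \<in> A. \<phi> a \<in> K'}" by (rule prpphi)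
      then have "compactin (mtopology_of X) {a \<in> A. \<phi> a \<in> K'}"
        unfolding compactin_subtopology by (rule conjunct1)
      then have "compactin mtopology {a \<in> A. \<phi> a \<in> K'}"
        unfolding mtopology_of_def by simp
      then have "mbounded {a \<in> A. \<phi> a \<in> K'}" by (rule compactin_imp_mbounded)
      then obtain c B where cB: "{a \<in> A. \<phi> a \<in> K'} \<subseteq> mcball c B" unfolding mbounded_def by blast
      have sub: "x \<in> mcball c (B + R + 1)" if x: "x \<in> P" for x
      proof -
        have xM: "x \<in> mspace X" and xK: "\<psi> x \<in> K" using x by (auto simp: P_def)
        have "D x \<le> \<psi> x $ k" by (simp add: \<psi>c)
        also have "\<dots> \<le> norm (\<psi> x)" using component_le_norm_cart[of "\<psi> x" k] by linarith
        also have "\<dots> \<le> R" using R(2)[OF xK] .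
        finally have DxR: "D x \<le> R" .
        obtain a where a: "a \<in> A" "mdist X x a < D x + 1" using Dex[OF xM] by blast
        have aM: "a \<in> mspace X" using a AX by auto
        have "norm (\<phi> a) = norm (\<psi> a)" using \<psi>A[OF a(1)] by simp
        also have "\<dots> \<le> norm (\<psi> x) + dist (\<psi> a) (\<psi> x)"
          by (metis dist_0_norm dist_commute dist_triangle)
        also have "\<dots> \<le> R + (\<Lambda> * mdist X a x + \<sigma>)"
          using R(2)[OF xK] \<psi>lip[OF aM xM] by linarith
        also have "\<dots> \<le> R + (\<Lambda> * (R + 1) + \<sigma>)"
          using mult_left_mono[of "mdist X a x" "R + 1" \<Lambda>] \<Lambda>0 a(2) DxR commute[of a x] by linarith
        finally have "norm (\<phi> a) \<le> R'" by (simp add: R'_def)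
        then have "\<phi> a \<in> K'" using phiS[OF a(1)] by (simp add: K'_def)
        then have "a \<in> mcball c B" using cB a(1) by blast
        then have "c \<in> mspace X" "mdist X c a \<le> B" by auto
        moreover have "mdist X c x \<le> mdist X c a + mdist X a x" using triangle \<open>c \<in> mspace X\<close> aM xM by blast
        ultimately show ?thesis using xM a(2) DxR commute[of a x] by auto
      qed
      obtain x1 where "x1 \<in> P" using False by blast
      then have cM: "c \<in> mspace X" using sub by auto
      have "compactin (mtopology_of X) (mcball_of X c (B + R + 1))"
        using pX cM by (simp add: proper_metric_def)
      then have "compactin (mtopology_of X) (mcball c (B + R + 1))" by (simp add: mcball_of_def)
      then have "compactin (mtopology_of X) P" using closed_compactin Pcl sub by blast
      then show ?thesis by (simp add: P_def)
    qed
  qed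
  have nz: "nonzero_norm X (half_space_metric k) \<psi>"
    if nzphi: "nonzero_norm (submetric X A) (half_space_metric k) \<phi>"
  proof -
    obtain a0 where a0: "a0 \<in> A" using Ane by blast
    have a0M: "a0 \<in> mspace X" using a0 AX by auto
    show ?thesis unfolding nonzero_norm_def mspace_half mdist_half
    proof (intro ballI)
      fix x0 y0 assume x0: "x0 \<in> mspace X" and y0: "y0 \<in> {x::real^'n. 0 \<le> x $ k}"
      obtain c b where cb: "c > 0" "b \<ge> 0" "\<And>a. a \<in> A \<Longrightarrow> dist (\<phi> a) y0 \<ge> c * mdist X a a0 - b"
        using nzphi a0 y0 mA unfolding nonzero_norm_def mspace_half mdist_half mdist_submetric by blast
      define e where "e = mdist X a0 x0"
      define ny where "ny = norm y0"
      define \<beta> where "\<beta> = (c + \<Lambda>) * (ny + 1) + b + \<sigma> + c * e"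
      define \<alpha> where "\<alpha> = c + \<Lambda> + 1"
      have \<alpha>0: "\<alpha> > 0" using cb \<Lambda>0 by (simp add: \<alpha>_def)
      have \<beta>0: "\<beta> \<ge> 0" using cb \<Lambda>0 \<sigma>0 by (simp add: \<beta>_def e_def ny_def)
      have key: "c * mdist X x x0 \<le> \<alpha> * dist (\<psi> x) y0 + \<beta>" if xM: "x \<in> mspace X" for x
      proof -
        define Mx where "Mx = dist (\<psi> x) y0"
        have "D x \<le> \<psi> x $ k" by (simp add: \<psi>c)
        also have "\<dots> = (\<psi> x - y0) $ k + y0 $ k" by simp
        also have "\<dots> \<le> Mx + ny"
          using component_le_norm_cart[of "\<psi> x - y0" k] component_le_norm_cart[of y0 k]
          by (simp add: Mx_def ny_def dist_norm)
        finally have Dx: "D x \<le> Mx + ny" .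
        obtain a where a: "a \<in> A" "mdist X x a < D x + 1" using Dex[OF xM] by blast
        have aM: "a \<in> mspace X" using a AX by auto
        have "c * mdist X a a0 - b \<le> dist (\<phi> a) y0" using cb(3)[OF a(1)] .
        also have "\<dots> = dist (\<psi> a) y0" using \<psi>A[OF a(1)] by simp
        also have "\<dots> \<le> dist (\<psi> a) (\<psi> x) + Mx" by (simp add: Mx_def dist_triangle)
        also have "\<dots> \<le> \<Lambda> * mdist X a x + \<sigma> + Mx" using \<psi>lip[OF aM xM] by linarith
        finally have 1: "c * mdist X a a0 \<le> \<Lambda> * mdist X x a + \<sigma> + Mx + b" by (simp add: mdist_commute)
        have 2: "mdist X x x0 \<le> mdist X x a + mdist X a a0 + e"
          using triangle[OF xM aM x0] triangle[OF aM a0M x0] by (simp add: e_def)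
        have 3: "mdist X x a \<le> Mx + ny + 1" using a(2) Dx by linarith
        have "c * mdist X x x0 \<le> c * mdist X x a + c * mdist X a a0 + c * e"
          using mult_left_mono[OF 2, of c] cb(1) by (simp add: algebra_simps)
        also have "\<dots> \<le> (c + \<Lambda>) * mdist X x a + \<sigma> + Mx + b + c * e"
          using 1 by (simp add: algebra_simps)
        also have "\<dots> \<le> (c + \<Lambda>) * (Mx + ny + 1) + \<sigma> + Mx + b + c * e"
          using mult_left_mono[OF 3, of "c + \<Lambda>"] cb(1) \<Lambda>0 by simp
        also have "\<dots> = \<alpha> * Mx + \<beta>" by (simp add: \<alpha>_def \<beta>_def algebra_simps)
        finally show ?thesis by (simp add: Mx_def)
      qed
      show "\<exists>c b. 0 < c \<and> 0 \<le> b \<and> (\<forall>x\<in>mspace X. c * mdist X x x0 - b \<le> dist (\<psi> x) y0)"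
      proof (intro exI conjI ballI)
        show "0 < c / \<alpha>" using cb \<alpha>0 by simp
        show "0 \<le> \<beta> / \<alpha>" using \<beta>0 \<alpha>0 by simp
        fix x assume "x \<in> mspace X"
        from key[OF this] \<alpha>0 show "c / \<alpha> * mdist X x x0 - \<beta> / \<alpha> \<le> dist (\<psi> x) y0"
          by (simp add: field_simps)
      qed
    qed
  qed
  show ?thesis
    using c\<psi>H prp asy nz \<psi>A by (auto simp: morphism_A_def)
qed


lemma morph_empty:
  assumes "mspace X = {}"
  shows "morphism_At X Y \<psi>"
proof -
  have "continuous_map (mtopology_of X) (mtopology_of Y) \<psi>"
    using assms by (simp add: continuous_map_def)
  then show ?thesis using assms
    by (auto simp: morphism_At_def morphism_A_def proper_mmap_def asymp_lipschitz_def nonzero_norm_def)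
qed

lemma single_closed:
  assumes "x0 \<in> mspace X"
  shows "closedin (mtopology_of X) {x0}"
proof -
  have "Hausdorff_space (mtopology_of X)"
    by (simp add: Metric_space.Hausdorff_space_mtopology Metric_space_mspace_mdist mtopology_of_def)
  then show ?thesis using assms Hausdorff_imp_t1_space closedin_t1_singleton by fastforce
qed

lemma single_morph:
  fixes k :: "'n::finite"
  assumes x0: "x0 \<in> mspace X"
  shows "morphism_At (submetric X {x0}) (half_space_metric k) (\<lambda>_. 0)"
proof -
  have ms: "mspace (submetric X {x0}) = {x0}" using x0 by auto
  have c: "continuous_map (mtopology_of (submetric X {x0})) (mtopology_of (half_space_metric k)) (\<lambda>_. 0)"
    by (simp add: mtop_half)
  have p: "proper_mmap (submetric X {x0}) (half_space_metric k) (\<lambda>_. 0)"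
    unfolding proper_mmap_def ms
  proof (intro allI impI)
    fix K :: "(real^'n) set"
    have "finite {x \<in> {x0}. (0::real^'n) \<in> K}" by simp
    moreover have "{x \<in> {x0}. (0::real^'n) \<in> K} \<subseteq> topspace (mtopology_of (submetric X {x0}))"
      using ms by auto
    ultimately show "compactin (mtopology_of (submetric X {x0})) {x \<in> {x0}. (0::real^'n) \<in> K}"
      using finite_imp_compactin by blast
  qed
  have a: "asymp_lipschitz (submetric X {x0}) (half_space_metric k) (\<lambda>_. 0)"
    unfolding asymp_lipschitz_def ms by (rule exI[of _ 0], rule exI[of _ 0]) (simp add: mdist_half)
  have n: "nonzero_norm (submetric X {x0}) (half_space_metric k) (\<lambda>_. 0)"
    unfolding nonzero_norm_def ms
  proof (intro ballI)
    fix x y0 assume "x \<in> {x0}"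
    have z: "mdist X x0 x0 = 0" using mdist_zero[OF x0 x0] by simp
    show "\<exists>c b. c > 0 \<and> b \<ge> 0 \<and> (\<forall>w\<in>{x0}. mdist (half_space_metric k) (0::real^'n) y0 \<ge> c * mdist (submetric X {x0}) w x - b)"
      by (rule exI[of _ 1], rule exI[of _ 0]) (use \<open>x \<in> {x0}\<close> in \<open>simp add: mdist_half z\<close>)
  qed
  show ?thesis using c p a n by (simp add: morphism_At_def morphism_A_def)
qed

lemma ext_all:
  fixes X :: "'a metric" and k :: "'n::finite" and \<phi> :: "'a \<Rightarrow> real^'n"
  assumes pX: "proper_metric X" and Acl: "closedin (mtopology_of X) A"
    and mor: "morphism_A (submetric X A) (half_space_metric k) \<phi>"
  shows "\<exists>\<psi>. morphism_A X (half_space_metric k) \<psi> \<and> (\<forall>a\<in>A. \<psi> a = \<phi> a) \<and>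
     (nonzero_norm (submetric X A) (half_space_metric k) \<phi> \<longrightarrow> nonzero_norm X (half_space_metric k) \<psi>)"
proof (cases "A = {}")
  case False
  then show ?thesis using main[OF pX Acl False mor] by blast
next
  case True
  show ?thesis
  proof (cases "mspace X = {}")
    case True
    then have "morphism_At X (half_space_metric k) (\<lambda>_. 0)" by (rule morph_empty)
    then show ?thesis using \<open>A = {}\<close> by (auto simp: morphism_At_def)
  next
    case False
    then obtain x0 where x0: "x0 \<in> mspace X" by blast
    have sm: "morphism_At (submetric X {x0}) (half_space_metric k) (\<lambda>_. 0)" by (rule single_morph[OF x0])
    obtain \<psi> where "morphism_A X (half_space_metric k) \<psi>"
      "nonzero_norm (submetric X {x0}) (half_space_metric k) (\<lambda>_. 0) \<longrightarrow> nonzero_norm X (half_space_metric k) \<psi>"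
      using main[OF pX single_closed[OF x0] _ , of k "\<lambda>_. 0"] sm by (auto simp: morphism_At_def)
    then show ?thesis using sm \<open>A = {}\<close> by (auto simp: morphism_At_def)
  qed
qed

theorem theorem4p3:
  fixes X :: "'a metric" and k :: "'n::finite"
  assumes "proper_metric X"
  shows "extends_A X (half_space_metric k) \<and> extends_At X (half_space_metric k)"
proof
  show "extends_A X (half_space_metric k)"
    unfolding extends_A_def using ext_all[OF assms] by blast
  show "extends_At X (half_space_metric k)"
    unfolding extends_At_def morphism_At_def using ext_all[OF assms] by blast
qed

end
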